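(* Let $f\in\mathcal S_{\mathbf M}$. Then for any $\tau>0$, $n\in\mathbb N$ and $\varphi\in\Phi$, $$E_n(f)_{\mathbf M}\le 2C_{n,\varphi}(\tau)\,\omega_\varphi\Big(f,\frac{\tau}{n}\Big)_{\mathbf M},$$ where $C_{n,\varphi}(\tau):=\inf_{v\in V(\tau)}\frac{v(\tau)-v(0)}{I_{n,\varphi}(\tau,v)}$ and $I_{n,\varphi}(\tau,v):=\inf_{k\in\mathbb N,\,k\ge n}\int_0^\tau\varphi(ku/n)\,dv(u)$.
   Context: $L$ is the space of $2\pi$-periodic Lebesgue integrable functions, with Fourier coefficients $\widehat f(k)=(2\pi)^{-1}\int_0^{2\pi}f(x)e^{-\mathrm{i}kx}\,dx$, $k\in\mathbb Z$. Let $\mathbf M=\{M_k\}_{k\in\mathbb Z}$ be a sequence of Orlicz functions on $[0,\infty)$ (each $M_k$ nondecreasing and convex, $M_k(0)=0$, $M_k(u)\to\infty$ as $u\to\infty$). For a complex sequence $c=\{c_k\}_{k\in\mathbb Z}$, its Luxemburg norm is $\|c\|_{\mathbf M}=\inf\{a>0:\sum_kM_k(|c_k|/a)\le1\}$. $\mathcal S_{\mathbf M}$ is the space of $f\in L$ with $\|f\|_{\mathbf M}:=\|\{\widehat f(k)\}\|_{\mathbf M}<\infty$. $E_n(f)_{\mathbf M}=\inf\{\|f-t\|_{\mathbf M}:t\in\mathcal T_{n-1}\}$, where $\mathcal T_{n-1}$ is the set of trigonometric polynomials $\sum_{|k|\le n-1}c_ke^{\mathrm{i}kx}$, $c_k\in\mathbb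 C$. $\Phi$ is the set of all continuous, bounded, nonnegative, even functions $\varphi:\mathbb R\to\mathbb R$ with $\varphi(0)=0$ such that $\{t:\varphi(t)=0\}$ has Lebesgue measure zero. For $\varphi\in\Phi$, $h\in\mathbb R$, $\Delta_h^\varphi f$ denotes the sequence $\{\varphi(kh)\widehat f(k)\}_{k\in\mathbb Z}$, and $\omega_\varphi(f,\delta)_{\mathbf M}=\sup_{|h|\le\delta}\|\Delta_h^\varphi f\|_{\mathbf M}$. $V(\tau)$ is the set of bounded nondecreasing functions $v$ on $[0,\tau]$ that are not constant on $[0,\tau]$; integrals are Lebesgue–Stieltjes. *)

theory Defs
  imports "HOL-Analysis.Analysis"
begin

definition orlicz :: "(real \<Rightarrow> real) \<Rightarrow> bool" where
  "orlicz M \<longleftrightarrow> mono_on {0..} M \<and> convex_on {0..} M \<and> M 0 = 0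
      \<and> filterlim M at_top at_top"

definition periodic_L :: "(real \<Rightarrow> complex) set" where
  "periodic_L = {f. (\<forall>x. f (x + 2 * pi) = f x) \<and> set_integrable lborel {0..2*pi} f}"

definition fourier_coeff :: "(real \<Rightarrow> complex) \<Rightarrow> int \<Rightarrow> complex" where
  "fourier_coeff f k = complex_of_real (1 / (2 * pi)) *
      (LINT x:{0..2*pi}|lborel. f x * exp (- \<i> * of_int k * of_real x))"

(* Luxemburg norm of a complex sequence indexed by Z; value \<infinity> if no admissible a exists *)
definition lux_norm :: "(int \<Rightarrow> real \<Rightarrow> real) \<Rightarrow> (int \<Rightarrow> complex) \<Rightarrow> ereal" where
  "lux_norm M c = Inf (ereal ` {a. a > 0 \<and> (\<lambda>k. M k (cmod (c k) / a)) summable_on UNIV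
                                   \<and> (\<Sum>\<^sub>\<infinity>k. M k (cmod (c k) / a)) \<le> 1})"

definition S_M :: "(int \<Rightarrow> real \<Rightarrow> real) \<Rightarrow> (real \<Rightarrow> complex) set" where
  "S_M M = {f \<in> periodic_L. lux_norm M (fourier_coeff f) < \<infinity>}"

definition trig_polys :: "nat \<Rightarrow> (real \<Rightarrow> complex) set" where
  "trig_polys m = {t. \<exists>c :: int \<Rightarrow> complex.
      t = (\<lambda>x. \<Sum>k\<in>{-int m..int m}. c k * exp (\<i> * of_int k * of_real x))}"

definition best_approx :: "(int \<Rightarrow> real \<Rightarrow> real) \<Rightarrow> nat \<Rightarrow> (real \<Rightarrow> complex) \<Rightarrow> ereal" where
  "best_approx M n f = (INF t\<in>trig_polys (n - 1). lux_norm M (fourier_coeff (\<lambda>x. f x - t x)))"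

definition Phi :: "(real \<Rightarrow> real) set" where
  "Phi = {\<phi>. continuous_on UNIV \<phi> \<and> bounded (range \<phi>) \<and> (\<forall>t. 0 \<le> \<phi> t)
            \<and> (\<forall>t. \<phi> (- t) = \<phi> t) \<and> \<phi> 0 = 0 \<and> {t. \<phi> t = 0} \<in> null_sets lborel}"

definition Delta :: "(real \<Rightarrow> real) \<Rightarrow> real \<Rightarrow> (real \<Rightarrow> complex) \<Rightarrow> int \<Rightarrow> complex" where
  "Delta \<phi> h f = (\<lambda>k. complex_of_real (\<phi> (of_int k * h)) * fourier_coeff f k)"

definition modulus :: "(int \<Rightarrow> real \<Rightarrow> real) \<Rightarrow> (real \<Rightarrow> real) \<Rightarrow> (real \<Rightarrow> complex) \<Rightarrow> real \<Rightarrow> ereal" where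
  "modulus M \<phi> f \<delta> = (SUP h\<in>{h. \<bar>h\<bar> \<le> \<delta>}. lux_norm M (Delta \<phi> h f))"

definition Vset :: "real \<Rightarrow> (real \<Rightarrow> real) set" where
  "Vset \<tau> = {v. mono_on {0..\<tau>} v \<and> bounded (v ` {0..\<tau>}) \<and> (\<exists>s\<in>{0..\<tau>}. \<exists>t\<in>{0..\<tau>}. v s \<noteq> v t)}"

(* Lebesgue-Stieltjes measure dv of v on [0,\<tau>]: generated by the right-continuous
   regularisation of v, so that dv[0,\<tau>] = v \<tau> - v 0 (jumps at the endpoints included) *)
definition LS_measure :: "real \<Rightarrow> (real \<Rightarrow> real) \<Rightarrow> real measure" where
  "LS_measure \<tau> v = interval_measure
     (\<lambda>x. if x < 0 then v 0 else if \<tau> \<le> x then v \<tau> else Inf (v ` {x<..\<tau>}))"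

definition I_int :: "nat \<Rightarrow> (real \<Rightarrow> real) \<Rightarrow> real \<Rightarrow> (real \<Rightarrow> real) \<Rightarrow> real" where
  "I_int n \<phi> \<tau> v = (INF k\<in>{n..}. (LINT u:{0..\<tau>}|LS_measure \<tau> v. \<phi> (real k * u / real n)))"

definition C_const :: "nat \<Rightarrow> (real \<Rightarrow> real) \<Rightarrow> real \<Rightarrow> ereal" where
  "C_const n \<phi> \<tau> = (INF v\<in>Vset \<tau>. ereal (v \<tau> - v 0) / ereal (I_int n \<phi> \<tau> v))"

end

theory Submission
  imports Defs
begin


lemma LS_F_props:
  fixes v :: "real \<Rightarrow> real"
  assumes v: "mono_on {0..\<tau>} v" and tau: "\<tau> > 0"
  defines "F \<equiv> (\<lambda>x. if x < 0 then v 0 else if \<tau> \<le> x then v \<tau> else Inf (v ` {x<..\<tau>}))"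
  shows "\<And>x y. x \<le> y \<Longrightarrow> F x \<le> F y" and "\<And>a. continuous (at_right a) F"
proof -
  have bdd: "bdd_below (v ` {x<..\<tau>})" if "0 \<le> x" for x
    by (rule bdd_belowI[of _ "v 0"]) (use v that in \<open>auto intro: mono_onD\<close>)
  have lowz: "Inf (v ` {x<..\<tau>}) \<le> v z" if "0 \<le> x" "x < z" "z \<le> \<tau>" for x z
    by (rule cInf_lower) (use that bdd in auto)
  have geq0: "v 0 \<le> Inf (v ` {x<..\<tau>})" if "0 \<le> x" "x < \<tau>" for x
    by (rule cInf_greatest) (use that v in \<open>auto intro: mono_onD\<close>)
  show mono: "F x \<le> F y" if "x \<le> y" for x y
  proof -
    consider "y < 0" | "x < 0" "0 \<le> y" "y < \<tau>" | "x < 0" "\<tau> \<le> y" | "0 \<le> x" "y < \<tau>"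
      | "0 \<le> x" "x < \<tau>" "\<tau> \<le> y" | "\<tau> \<le> x" using that by linarith
    then show ?thesis
    proof cases
      case 1 then show ?thesis using that by (simp add: F_def)
    next
      case 2 then show ?thesis using geq0[of y] by (simp add: F_def)
    next
      case 3 then show ?thesis using v tau by (simp add: F_def mono_on_def)
    next
      case 4
      have "Inf (v ` {x<..\<tau>}) \<le> Inf (v ` {y<..\<tau>})"
        by (rule cInf_superset_mono) (use 4 that bdd in auto)
      then show ?thesis using 4 that by (simp add: F_def)
    next
      case 5 then show ?thesis using lowz[of x \<tau>] by (simp add: F_def)
    next
      case 6 then show ?thesis using that tau by (simp add: F_def)
    qed
  qed
  show "continuous (at_right a) F" for a
    unfolding continuous_within
  proof (rule order_tendstoI)
    fix b assume "b < F a"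
    then show "eventually (\<lambda>y. b < F y) (at_right a)"
      unfolding eventually_at_right_field
    proof (intro exI[of _ "a+1"] conjI allI impI)
      fix y assume "a < y" "y < a + 1"
      then show "b < F y" using mono[of a y] \<open>b < F a\<close> by linarith
    qed simp
  next
    fix b assume b: "F a < b"
    show "eventually (\<lambda>y. F y < b) (at_right a)"
    proof (cases "a < 0 \<or> \<tau> \<le> a")
      case True
      then show ?thesis
      proof
        assume "a < 0"
        then show ?thesis unfolding eventually_at_right_field using b
          by (intro exI[of _ 0]) (auto simp: F_def)
      next
        assume "\<tau> \<le> a"
        then show ?thesis unfolding eventually_at_right_field using b tau
          by (intro exI[of _ "a+1"]) (auto simp: F_def)
      qed
    next
      case False
      then have a: "0 \<le> a" "a < \<tau>" by auto
      then have "Inf (v ` {a<..\<tau>}) < b" using b by (simp add: F_def)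
      then obtain z where z: "z \<in> {a<..\<tau>}" "v z < b"
        by (subst (asm) cInf_less_iff) (use a bdd in auto)
      show ?thesis unfolding eventually_at_right_field
      proof (intro exI[of _ z] conjI allI impI)
        show "a < z" using z by auto
        fix y assume y: "a < y" "y < z"
        then have "F y = Inf (v ` {y<..\<tau>})" using a z by (simp add: F_def)
        also have "\<dots> \<le> v z" using lowz[of y z] y a z by auto
        finally show "F y < b" using z by simp
      qed
    qed
  qed
qed

lemma LS_emeasure:
  assumes v: "mono_on {0..\<tau>} v" and tau: "\<tau> > 0"
  shows "emeasure (LS_measure \<tau> v) {-1<..\<tau>} = ennreal (v \<tau> - v 0)"
  unfolding LS_measure_def
  by (subst emeasure_interval_measure_Ioc_eq) (use LS_F_props[OF v tau] tau in auto)



lemma orlicz_mono: "orlicz M \<Longrightarrow> 0 \<le> x \<Longrightarrow> x \<le> y \<Longrightarrow> M x \<le> M y"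
  unfolding orlicz_def by (auto intro: mono_onD)

lemma orlicz_nonneg: "orlicz M \<Longrightarrow> 0 \<le> x \<Longrightarrow> 0 \<le> M x"
  using orlicz_mono[of M 0 x] by (simp add: orlicz_def)

lemma fin_sums_le1:
  fixes g :: "'a \<Rightarrow> real"
  assumes "\<And>k. 0 \<le> g k" "\<And>F. finite F \<Longrightarrow> sum g F \<le> 1"
  shows "g summable_on UNIV \<and> infsum g UNIV \<le> 1"
proof -
  have s: "g summable_on UNIV"
    by (rule nonneg_bdd_above_summable_on) (use assms in \<open>auto intro!: bdd_aboveI[of _ 1]\<close>)
  moreover have "infsum g UNIV \<le> 1"
    by (rule infsum_le_finite_sums[OF s]) (use assms in auto)
  ultimately show ?thesis by blast
qed

lemma sum_le_infsum1:
  fixes g :: "'a \<Rightarrow> real"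
  assumes "g summable_on UNIV" "\<And>k. 0 \<le> g k" "infsum g UNIV \<le> 1" "finite F"
  shows "sum g F \<le> 1"
  using finite_sum_le_infsum[of g UNIV F] assms by auto

lemma lux_nonneg: "0 \<le> lux_norm M c"
  unfolding lux_norm_def by (rule Inf_greatest) auto

lemma lux_le:
  assumes "a > 0" "(\<lambda>k. M k (cmod (c k) / a)) summable_on UNIV"
    "(\<Sum>\<^sub>\<infinity>k. M k (cmod (c k) / a)) \<le> 1"
  shows "lux_norm M c \<le> ereal a"
  unfolding lux_norm_def by (rule Inf_lower) (use assms in auto)

lemma lux_less:
  assumes M: "\<And>k. orlicz (M k)" and l: "lux_norm M d < ereal b" and F: "finite F"
  shows "(\<Sum>k\<in>F. M k (cmod (d k) / b)) \<le> 1"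
proof -
  obtain a where a: "a > 0" "(\<lambda>k. M k (cmod (d k) / a)) summable_on UNIV"
    "(\<Sum>\<^sub>\<infinity>k. M k (cmod (d k) / a)) \<le> 1" "ereal a < ereal b"
    using l unfolding lux_norm_def Inf_less_iff by auto
  have ab: "a < b" using a by simp
  have "(\<Sum>k\<in>F. M k (cmod (d k) / b)) \<le> (\<Sum>k\<in>F. M k (cmod (d k) / a))"
    by (rule sum_mono, rule orlicz_mono[OF M]) (use a ab in \<open>auto intro: divide_left_mono\<close>)
  also have "\<dots> \<le> 1"
    by (rule sum_le_infsum1) (use a F M orlicz_nonneg in auto)
  finally show ?thesis .
qed

lemma lux_zero_imp:
  assumes M: "\<And>k. orlicz (M k)" and l: "lux_norm M d \<le> 0"
  shows "d k = 0"
proof (rule ccontr)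
  assume dk: "d k \<noteq> 0"
  have "eventually (\<lambda>x. M k x > 1) at_top"
    using M[of k] unfolding orlicz_def filterlim_at_top_dense by auto
  then obtain X where X: "\<And>x. x \<ge> X \<Longrightarrow> M k x > 1"
    unfolding eventually_at_top_linorder by auto
  define X' where "X' = max X 1"
  define a0 where "a0 = cmod (d k) / X'"
  have X'p: "X' > 0" by (simp add: X'_def)
  have a0p: "a0 > 0" using dk X'p by (simp add: a0_def)
  have "ereal a0 \<le> lux_norm M d"
    unfolding lux_norm_def
  proof (rule Inf_greatest, clarsimp)
    fix a assume a: "a > 0" "(\<lambda>k. M k (cmod (d k) / a)) summable_on UNIV"
      "(\<Sum>\<^sub>\<infinity>k. M k (cmod (d k) / a)) \<le> 1"
    have "M k (cmod (d k) / a) \<le> 1"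
      using sum_le_infsum1[of "\<lambda>k. M k (cmod (d k) / a)" "{k}"] a M orlicz_nonneg by auto
    then have lt: "cmod (d k) / a < X" using X[of "cmod (d k) / a"] by force
    have "cmod (d k) / a < 1" if "X \<le> 1"
    proof (rule ccontr)
      assume "\<not> cmod (d k) / a < 1"
      then have "M k 1 \<le> M k (cmod (d k) / a)" by (intro orlicz_mono[OF M[of k]]) auto
      then show False using X[of 1] that \<open>M k (cmod (d k) / a) \<le> 1\<close> by auto
    qed
    then have "cmod (d k) / a < X'" using lt unfolding X'_def by (cases "X \<le> 1") auto
    then show "a0 \<le> a" using a X'p unfolding a0_def by (auto simp: field_simps)
  qed
  then show False using l a0p using order_trans[of "ereal a0" "lux_norm M d" 0] by (simp add: zero_ereal_def)
qed

lemma lux_zero_seq: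
  assumes M: "\<And>k. orlicz (M k)" and c: "\<And>k. c k = 0"
  shows "lux_norm M c = 0"
proof -
  have "lux_norm M c \<le> 0 + ereal e" if "e > 0" for e
    using lux_le[of e M c] that M c by (simp add: orlicz_def)
  then have "lux_norm M c \<le> 0" by (rule ereal_le_epsilon2)
  then show ?thesis using lux_nonneg[of M c] by simp
qed



lemma set_int_mult_exp:
  assumes f: "set_integrable lborel S f" and S: "S \<in> sets lborel"
  shows "set_integrable lborel S (\<lambda>x. f x * exp (- \<i> * of_int k * of_real x))"
  unfolding set_integrable_def
proof (rule Bochner_Integration.integrable_bound)
  show "integrable lborel (\<lambda>x. indicator S x *\<^sub>R f x)" using f by (simp add: set_integrable_def)
  have "(\<lambda>x. indicator S x *\<^sub>R f x) \<in> borel_measurable lborel"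
    using f by (simp add: set_integrable_def)
  then have "(\<lambda>x. (indicator S x *\<^sub>R f x) * exp (- \<i> * of_int k * of_real x)) \<in> borel_measurable lborel"
    by (intro borel_measurable_times) (auto intro!: borel_measurable_continuous_onI continuous_intros)
  then show "(\<lambda>x. indicator S x *\<^sub>R (f x * exp (- \<i> * of_int k * of_real x))) \<in> borel_measurable lborel"
    by (simp add: mult.assoc)
  have "norm (exp (- \<i> * of_int k * of_real x)) = 1" for x
    by (simp add: norm_exp_eq_Re)
  then show "AE x in lborel. norm (indicator S x *\<^sub>R (f x * exp (- \<i> * of_int k * of_real x)))
      \<le> norm (indicator S x *\<^sub>R f x)"
    by (auto simp: norm_mult split: split_indicator)
qed

lemma exp_int_l:
  fixes l :: int
  shows "(LINT x:{0..2*pi}|lborel. exp (of_int l * of_real x * \<i>)) = (if l = 0 then 2 * pi else 0)"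
proof (cases "l = 0")
  case True
  then show ?thesis by (simp add: set_integral_const scaleR_conv_of_real)
next
  case False
  define A where "A = of_int l * \<i>"
  have A0: "A \<noteq> 0" using False by (simp add: A_def)
  have eq: "exp (of_int l * of_real x * \<i>) = exp (x *\<^sub>R A)" for x
    by (simp add: A_def scaleR_conv_of_real mult_ac)
  have "(LINT x:{0..2*pi}|lborel. exp (of_int l * of_real x * \<i>)) = (LBINT x=ereal 0..ereal (2*pi). exp (x *\<^sub>R A))"
    by (subst interval_integral_Icc) (simp_all add: eq)
  also have "\<dots> = exp ((2*pi) *\<^sub>R A) / A - exp (0 *\<^sub>R A) / A"
  proof (rule interval_integral_FTC_finite)
    show "continuous_on {min 0 (2 * pi)..max 0 (2 * pi)} (\<lambda>x. exp (x *\<^sub>R A))"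
      by (intro continuous_intros)
    fix x
    have "((\<lambda>t. exp (t *\<^sub>R A) / A) has_vector_derivative exp (x *\<^sub>R A) * A / A)
        (at x within {min 0 (2 * pi)..max 0 (2 * pi)})"
      using exp_scaleR_has_vector_derivative_right[of A x]
      by (intro has_vector_derivative_divide) auto
    then show "((\<lambda>t. exp (t *\<^sub>R A) / A) has_vector_derivative exp (x *\<^sub>R A))
        (at x within {min 0 (2 * pi)..max 0 (2 * pi)})" using A0 by simp
  qed
  also have "exp ((2*pi) *\<^sub>R A) = 1"
    using exp_integer_2pi[of "of_int l"] by (simp add: A_def scaleR_conv_of_real mult_ac)
  finally show ?thesis using False by simp
qed

lemma set_integral_sum':
  fixes g :: "'i \<Rightarrow> 'a \<Rightarrow> 'b::{banach, second_countable_topology}"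
  assumes "finite J" "\<And>j. j \<in> J \<Longrightarrow> set_integrable M S (g j)"
  shows "(LINT x:S|M. (\<Sum>j\<in>J. g j x)) = (\<Sum>j\<in>J. LINT x:S|M. g j x)"
proof -
  have eq: "(\<lambda>x. indicator S x *\<^sub>R (\<Sum>j\<in>J. g j x)) = (\<lambda>x. \<Sum>j\<in>J. indicator S x *\<^sub>R g j x)"
    by (simp add: scaleR_sum_right)
  show ?thesis
    unfolding set_lebesgue_integral_def eq
    by (rule Bochner_Integration.integral_sum[where f="\<lambda>j x. indicator S x *\<^sub>R g j x"]) (use assms in \<open>auto simp: set_integrable_def\<close>)
qed

lemma set_integrable_sum':
  fixes g :: "'i \<Rightarrow> 'a \<Rightarrow> 'b::{banach, second_countable_topology}"
  assumes "finite J" "\<And>j. j \<in> J \<Longrightarrow> set_integrable M S (g j)"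
  shows "set_integrable M S (\<lambda>x. \<Sum>j\<in>J. g j x)"
proof -
  have eq: "(\<lambda>x. indicator S x *\<^sub>R (\<Sum>j\<in>J. g j x)) = (\<lambda>x. \<Sum>j\<in>J. indicator S x *\<^sub>R g j x)"
    by (simp add: scaleR_sum_right)
  show ?thesis
    unfolding set_integrable_def eq
    by (rule Bochner_Integration.integrable_sum[where f="\<lambda>j x. indicator S x *\<^sub>R g j x"])
      (use assms in \<open>auto simp: set_integrable_def\<close>)
qed



lemma fc_partial:
  fixes m :: nat
  assumes f: "f \<in> periodic_L"
  defines "t \<equiv> \<lambda>x. \<Sum>j\<in>{-int m..int m}. fourier_coeff f j * exp (\<i> * of_int j * of_real x)"
  shows "fourier_coeff (\<lambda>x. f x - t x) k = (if k \<in> {-int m..int m} then 0 else fourier_coeff f k)"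
proof -
  define J where "J = {-int m..int m}"
  define K where "K = (\<lambda>x::real. exp (- \<i> * of_int k * of_real x))"
  define S where "S = {0..2*pi}"
  have fi: "set_integrable lborel S f" using f by (simp add: periodic_L_def S_def)
  have fK: "set_integrable lborel S (\<lambda>x. f x * K x)"
    unfolding K_def by (rule set_int_mult_exp[OF fi]) (simp add: S_def)
  have ee: "exp (\<i> * of_int j * of_real x) * K x = exp (of_int (j - k) * of_real x * \<i>)" for j x
    by (simp add: K_def exp_add[symmetric] algebra_simps)
  have ie: "set_integrable lborel S (\<lambda>x. exp (l * of_real x * \<i>))" for l :: complex
    unfolding set_integrable_def S_def
    by (rule borel_integrable_compact) (auto intro!: continuous_intros)
  have tK: "t x * K x = (\<Sum>j\<in>J. fourier_coeff f j * exp (of_int (j - k) * of_real x * \<i>))" for x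
    unfolding t_def J_def sum_distrib_right by (intro sum.cong refl) (metis mult.assoc ee)
  have tKi: "set_integrable lborel S (\<lambda>x. t x * K x)"
    unfolding tK by (intro set_integrable_sum') (auto intro!: set_integrable_mult_right ie simp: J_def)
  have "(LINT x:S|lborel. t x * K x) = (\<Sum>j\<in>J. fourier_coeff f j * (LINT x:S|lborel. exp (of_int (j - k) * of_real x * \<i>)))"
    unfolding tK by (subst set_integral_sum') (auto intro!: set_integrable_mult_right ie simp: J_def)
  also have "\<dots> = (\<Sum>j\<in>J. if j = k then fourier_coeff f j * (2 * pi) else 0)"
  proof (intro sum.cong refl)
    fix j
    show "fourier_coeff f j * (LINT x:S|lborel. exp (of_int (j - k) * of_real x * \<i>)) =
      (if j = k then fourier_coeff f j * (2 * pi) else 0)"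
      using exp_int_l[of "j - k"] unfolding S_def by (simp del: of_int_diff)
  qed
  also have "\<dots> = (if k \<in> J then fourier_coeff f k * (2 * pi) else 0)"
    by (simp add: sum.delta' J_def)
  finally have tv: "(LINT x:S|lborel. t x * K x) = (if k \<in> J then fourier_coeff f k * (2 * pi) else 0)" .
  have "fourier_coeff (\<lambda>x. f x - t x) k = complex_of_real (1 / (2 * pi)) * (LINT x:S|lborel. f x * K x - t x * K x)"
    by (simp add: fourier_coeff_def K_def S_def left_diff_distrib)
  also have "\<dots> = fourier_coeff f k - complex_of_real (1 / (2 * pi)) * (LINT x:S|lborel. t x * K x)"
    by (subst set_integral_diff(2)[OF fK tKi]) (simp add: right_diff_distrib fourier_coeff_def K_def S_def)
  also have "\<dots> = (if k \<in> J then 0 else fourier_coeff f k)"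
    by (simp add: tv)
  finally show ?thesis by (simp add: J_def)
qed



lemma set_integrable_const':
  fixes c :: real
  assumes "S \<in> sets N" "emeasure N S < \<infinity>"
  shows "set_integrable N S (\<lambda>_. c)"
proof -
  have "(\<lambda>x. indicator S x *\<^sub>R c) = (\<lambda>x. c * indicator S x)" by (auto simp: fun_eq_iff)
  then show ?thesis unfolding set_integrable_def using assms by simp
qed

lemma set_integral_nonneg':
  fixes y :: "'a \<Rightarrow> real"
  assumes "set_integrable N S y" "\<And>u. u \<in> S \<Longrightarrow> 0 \<le> y u"
  shows "0 \<le> (LINT u:S|N. y u)"
  using set_integral_mono[of N S "\<lambda>_. 0" y] assms by (simp add: set_integrable_def)

lemma jensen_orlicz:
  fixes N :: "'a measure" and y :: "'a \<Rightarrow> real"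
  assumes M: "orlicz M" and S: "S \<in> sets N" and fin: "emeasure N S < \<infinity>"
    and m: "measure N S > 0"
    and yi: "set_integrable N S y" and y0: "\<And>u. 0 \<le> y u"
    and Mi: "set_integrable N S (\<lambda>u. M (y u))"
  shows "M ((LINT u:S|N. y u) / measure N S) \<le> (LINT u:S|N. M (y u)) / measure N S"
proof -
  define m' where "m' = measure N S"
  define x0 where "x0 = (LINT u:S|N. y u) / m'"
  have x0: "0 \<le> x0" unfolding x0_def m'_def using set_integral_nonneg'[OF yi] y0 m by simp
  have Mint0: "0 \<le> (LINT u:S|N. M (y u))"
    using set_integral_nonneg'[OF Mi] y0 orlicz_nonneg[OF M] by simp
  show ?thesis
  proof (cases "x0 = 0")
    case True
    then show ?thesis using Mint0 m M unfolding x0_def m'_def by (simp add: orlicz_def)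
  next
    case False
    with x0 have x0p: "x0 > 0" by simp
    define s where "s = Inf ((\<lambda>t. (M x0 - M t) / (x0 - t)) ` ({x0<..} \<inter> {0..}))"
    have cv: "convex_on {0..} M" using M by (simp add: orlicz_def)
    have pt: "M x0 + s * (y u - x0) \<le> M (y u)" for u
      unfolding s_def by (rule convex_le_Inf_differential[OF cv]) (use x0p y0 in auto)
    have ci: "set_integrable N S (\<lambda>_. c)" for c :: real by (rule set_integrable_const'[OF S fin])
    have li: "set_integrable N S (\<lambda>u. M x0 + s * (y u - x0))"
      by (intro set_integral_add set_integral_diff set_integrable_mult_right yi ci)
    have "(LINT u:S|N. M x0 + s * (y u - x0)) = M x0 * m' + s * ((LINT u:S|N. y u) - x0 * m')"
      using ci yi fin S
      by (simp add: set_integral_add set_integral_diff set_integral_const m'_def)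
    also have "\<dots> = M x0 * m'" using m unfolding x0_def m'_def by simp
    finally have "M x0 * m' \<le> (LINT u:S|N. M (y u))"
      using set_integral_mono[OF li Mi pt] by simp
    then show ?thesis using m unfolding x0_def m'_def by (simp add: field_simps)
  qed
qed



lemma sets_LS [simp, measurable_cong]: "sets (LS_measure \<tau> v) = sets borel"
  by (simp add: LS_measure_def)

lemma set_integrable_bounded:
  fixes g :: "'a \<Rightarrow> real"
  assumes "S \<in> sets N" "emeasure N S < \<infinity>" "g \<in> borel_measurable N" "\<And>u. \<bar>g u\<bar> \<le> B"
  shows "set_integrable N S g"
  by (rule set_integrable_bound[OF set_integrable_const'[OF assms(1,2), of B]])
     (use assms in \<open>auto simp: set_borel_measurable_def intro: order_trans[OF _ abs_ge_self]\<close>)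

lemma main_bound:
  fixes M :: "int \<Rightarrow> real \<Rightarrow> real" and f :: "real \<Rightarrow> complex"
    and \<tau> :: real and n :: nat and \<phi> :: "real \<Rightarrow> real" and b :: real
  assumes M: "\<And>k. orlicz (M k)"
    and tau: "\<tau> > 0" and n: "n \<ge> 1"
    and phi: "\<phi> \<in> Phi" and v: "v \<in> Vset \<tau>"
    and I: "I_int n \<phi> \<tau> v > 0"
    and b: "b > 0" and mb: "modulus M \<phi> f (\<tau> / real n) < ereal b"
  shows "lux_norm M (\<lambda>k. if k \<in> {-int (n-1)..int (n-1)} then 0 else fourier_coeff f k)
      \<le> ereal ((v \<tau> - v 0) * b / I_int n \<phi> \<tau> v)"
proof -
  define c where "c = (\<lambda>k. if k \<in> {-int (n-1)..int (n-1)} then 0 else fourier_coeff f k)"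
  define N where "N = LS_measure \<tau> v"
  define S where "S = {0..\<tau>}"
  define W where "W = v \<tau> - v 0"
  define I where "I = I_int n \<phi> \<tau> v"
  have vm: "mono_on {0..\<tau>} v" using v by (simp add: Vset_def)
  have S: "S \<in> sets N" by (simp add: N_def S_def)
  have "emeasure N S \<le> emeasure N {-1<..\<tau>}"
    by (rule emeasure_mono) (auto simp: S_def N_def)
  also have "\<dots> = ennreal W" using LS_emeasure[OF vm tau] by (simp add: N_def W_def)
  finally have eS: "emeasure N S \<le> ennreal W" .
  then have fin: "emeasure N S < \<infinity>" by (rule le_less_trans) simp
  define m where "m = measure N S"
  have W0: "0 \<le> W" using vm tau by (auto simp: W_def mono_on_def)
  have mW: "m \<le> W"
  proof -
    have "m \<le> enn2real (ennreal W)" unfolding m_def measure_def by (rule enn2real_mono[OF eS]) simp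
    then show ?thesis using W0 by simp
  qed
  have m0: "0 \<le> m" by (simp add: m_def)
  have phic: "continuous_on UNIV \<phi>" and phi0: "\<And>t. 0 \<le> \<phi> t" and phie: "\<And>t. \<phi> (- t) = \<phi> t"
    using phi by (auto simp: Phi_def)
  have "bounded (range \<phi>)" using phi by (simp add: Phi_def)
  then obtain B where B0: "\<forall>x\<in>range \<phi>. norm x \<le> B" unfolding bounded_iff by blast
  have B: "\<And>t. \<phi> t \<le> B" using B0 by (metis abs_le_D1 rangeI real_norm_def)
  have phim: "\<phi> \<in> borel_measurable borel" using phic by (rule borel_measurable_continuous_onI)
  have phiN: "(\<lambda>u. \<phi> (g u)) \<in> borel_measurable N" if "g \<in> borel_measurable borel" for g
    using measurable_compose[OF that phim] unfolding N_def measurable_cong_sets[OF sets_LS refl] .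
  have phint: "set_integrable N S (\<lambda>u. \<phi> (r * u) * z)" for r z
  proof (rule set_integrable_bounded[OF S fin, of _ "B * \<bar>z\<bar>"])
    show "(\<lambda>u. \<phi> (r * u) * z) \<in> borel_measurable N"
      by (intro borel_measurable_times phiN) auto
    fix u show "\<bar>\<phi> (r * u) * z\<bar> \<le> B * \<bar>z\<bar>"
      unfolding abs_mult using phi0[of "r*u"] B[of "r*u"] by (simp add: mult_right_mono)
  qed
  define J where "J = (\<lambda>k::nat. LINT u:S|N. \<phi> (real k * u / real n))"
  have J0: "0 \<le> J k" for k
    unfolding J_def by (rule set_integral_nonneg') (use phint[of "real k / real n" 1] phi0 in auto)
  have IJ: "I \<le> J k" if "k \<ge> n" for k
    unfolding I_def I_int_def J_def[symmetric] S_def[symmetric] N_def[symmetric]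
    by (rule cINF_lower) (use that J0 in \<open>auto intro!: bdd_belowI[of _ 0]\<close>)
  have JB: "J k \<le> B * m" for k
  proof -
    have "J k \<le> (LINT u:S|N. B)"
      unfolding J_def
      by (rule set_integral_mono) (use phint[of "real k / real n" 1] set_integrable_const'[OF S fin] B in auto)
    also have "\<dots> = B * m" using S fin by (simp add: set_integral_const m_def)
    finally show ?thesis .
  qed
  have Ip: "I > 0" using I by (simp add: I_def)
  have mp: "m > 0"
  proof (rule ccontr)
    assume "\<not> m > 0" then have "m = 0" using m0 by simp
    then show False using IJ[of n] JB[of n] Ip by simp
  qed
  define a where "a = m * b / I"
  have ap: "a > 0" using mp b Ip by (simp add: a_def)
  define y where "y = (\<lambda>k u. \<phi> (of_int k * (u / real n)) * cmod (fourier_coeff f k) / b)"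
  have y0: "0 \<le> y k u" for k u using phi0 b by (simp add: y_def)
  have yi: "set_integrable N S (y k)" for k
    using phint[of "of_int k / real n" "cmod (fourier_coeff f k) / b"] by (simp add: y_def)
  have Myi: "set_integrable N S (\<lambda>u. M k (y k u))" for k
  proof (rule set_integrable_bounded[OF S fin, of _ "M k (B * cmod (fourier_coeff f k) / b)"])
    have mono: "mono (\<lambda>x. M k (max 0 x))"
      by (auto intro!: monoI orlicz_mono[OF M])
    have "(\<lambda>u. M k (max 0 (y k u))) \<in> borel_measurable N"
      by (rule measurable_compose[OF _ borel_measurable_mono[OF mono]])
         (use phiN in \<open>auto simp: y_def intro!: borel_measurable_times\<close>)
    then show "(\<lambda>u. M k (y k u)) \<in> borel_measurable N" using y0 by (simp add: max_absorb2)
    fix u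
    have "y k u \<le> B * cmod (fourier_coeff f k) / b"
      using B b by (auto simp: y_def intro!: divide_right_mono mult_right_mono)
    then show "\<bar>M k (y k u)\<bar> \<le> M k (B * cmod (fourier_coeff f k) / b)"
      using orlicz_nonneg[OF M y0] orlicz_mono[OF M y0] by simp
  qed
  have tm: "M k (cmod (c k) / a) \<le> (LINT u:S|N. M k (y k u)) / m" for k
  proof (cases "k \<in> {-int (n-1)..int (n-1)}")
    case True
    then show ?thesis using M[of k] set_integral_nonneg'[OF Myi] orlicz_nonneg[OF M y0] m0
      by (simp add: c_def orlicz_def)
  next
    case False
    define k' where "k' = nat \<bar>k\<bar>"
    have k'n: "k' \<ge> n" using False n unfolding k'_def by auto
    have ev: "\<phi> (real k' * u / real n) = \<phi> (of_int k * (u / real n))" for u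
    proof (cases "k \<ge> 0")
      case True then show ?thesis by (simp add: k'_def)
    next
      case False
      then have "real k' * u / real n = - (of_int k * (u / real n))" by (simp add: k'_def)
      then show ?thesis by (simp add: phie)
    qed
    have Jy: "(LINT u:S|N. y k u) = J k' * cmod (fourier_coeff f k) / b"
      by (simp add: y_def J_def ev)
    have "cmod (c k) / a = cmod (fourier_coeff f k) * I / (m * b)"
    proof -
      have ck: "c k = fourier_coeff f k" using False unfolding c_def by auto
      show ?thesis by (simp add: ck a_def)
    qed
    also have "\<dots> \<le> cmod (fourier_coeff f k) * J k' / (m * b)"
      using IJ[OF k'n] mp b by (intro divide_right_mono mult_left_mono) auto
    also have "\<dots> = (LINT u:S|N. y k u) / m" using mp b by (simp add: Jy mult.commute)
    finally have le: "cmod (c k) / a \<le> (LINT u:S|N. y k u) / m" .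
    have "M k (cmod (c k) / a) \<le> M k ((LINT u:S|N. y k u) / m)"
      by (rule orlicz_mono[OF M _ le]) (use ap in auto)
    also have "\<dots> \<le> (LINT u:S|N. M k (y k u)) / m"
      unfolding m_def by (rule jensen_orlicz[OF M S fin _ yi y0 Myi]) (use mp m_def in auto)
    finally show ?thesis .
  qed
  have fin_le: "(\<Sum>k\<in>F. M k (cmod (c k) / a)) \<le> 1" if F: "finite F" for F
  proof -
    have "(\<Sum>k\<in>F. M k (cmod (c k) / a)) \<le> (\<Sum>k\<in>F. (LINT u:S|N. M k (y k u)) / m)"
      by (rule sum_mono) (rule tm)
    also have "\<dots> = (LINT u:S|N. (\<Sum>k\<in>F. M k (y k u))) / m"
      by (simp add: sum_divide_distrib set_integral_sum'[OF F Myi])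
    also have "\<dots> \<le> (LINT u:S|N. 1) / m"
    proof (intro divide_right_mono set_integral_mono)
      show "set_integrable N S (\<lambda>u. \<Sum>k\<in>F. M k (y k u))" by (rule set_integrable_sum'[OF F Myi])
      show "set_integrable N S (\<lambda>u. 1::real)" by (rule set_integrable_const'[OF S fin])
      fix u assume u: "u \<in> S"
      have "lux_norm M (Delta \<phi> (u / real n) f) \<le> modulus M \<phi> f (\<tau> / real n)"
        unfolding modulus_def by (rule SUP_upper) (use u tau n in \<open>auto simp: S_def divide_right_mono\<close>)
      then have "lux_norm M (Delta \<phi> (u / real n) f) < ereal b" using mb by simp
      from lux_less[OF M this F]
      show "(\<Sum>k\<in>F. M k (y k u)) \<le> 1"
        by (simp add: Delta_def y_def norm_mult phi0)
    qed (use m0 in auto)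
    also have "\<dots> = 1" using S fin mp by (simp add: set_integral_const m_def)
    finally show ?thesis .
  qed
  have "(\<lambda>k. M k (cmod (c k) / a)) summable_on UNIV \<and> (\<Sum>\<^sub>\<infinity>k. M k (cmod (c k) / a)) \<le> 1"
    by (rule fin_sums_le1) (use fin_le orlicz_nonneg[OF M] ap in auto)
  then have "lux_norm M c \<le> ereal a" using lux_le[OF ap] by blast
  also have "ereal a \<le> ereal ((v \<tau> - v 0) * b / I_int n \<phi> \<tau> v)"
    using mW b Ip by (simp add: a_def W_def I_def divide_right_mono)
  finally show ?thesis unfolding c_def .
qed



lemma I_bound:
  fixes \<tau> :: real and n :: nat and \<phi> :: "real \<Rightarrow> real" and B :: real
  assumes tau: "\<tau> > 0" and n: "n \<ge> 1"
    and phi: "\<phi> \<in> Phi" and v: "v \<in> Vset \<tau>" and B: "\<And>t. \<phi> t \<le> B"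
  shows "0 \<le> I_int n \<phi> \<tau> v \<and> I_int n \<phi> \<tau> v \<le> B * (v \<tau> - v 0)"
proof -
  define N where "N = LS_measure \<tau> v"
  define S where "S = {0..\<tau>}"
  define W where "W = v \<tau> - v 0"
  have vm: "mono_on {0..\<tau>} v" using v by (simp add: Vset_def)
  have S: "S \<in> sets N" by (simp add: N_def S_def)
  have "emeasure N S \<le> emeasure N {-1<..\<tau>}"
    by (rule emeasure_mono) (auto simp: S_def N_def)
  also have "\<dots> = ennreal W" using LS_emeasure[OF vm tau] by (simp add: N_def W_def)
  finally have eS: "emeasure N S \<le> ennreal W" .
  then have fin: "emeasure N S < \<infinity>" by (rule le_less_trans) simp
  define m where "m = measure N S"
  have W0: "0 \<le> W" using vm tau by (auto simp: W_def mono_on_def)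
  have mW: "m \<le> W"
  proof -
    have "m \<le> enn2real (ennreal W)" unfolding m_def measure_def by (rule enn2real_mono[OF eS]) simp
    then show ?thesis using W0 by simp
  qed
  have phic: "continuous_on UNIV \<phi>" and phi0: "\<And>t. 0 \<le> \<phi> t"
    using phi by (auto simp: Phi_def)
  have B0: "0 \<le> B" using B[of 0] phi0[of 0] by simp
  have phim: "\<phi> \<in> borel_measurable borel" using phic by (rule borel_measurable_continuous_onI)
  have phiN: "(\<lambda>u. \<phi> (g u)) \<in> borel_measurable N" if "g \<in> borel_measurable borel" for g
    using measurable_compose[OF that phim] unfolding N_def measurable_cong_sets[OF sets_LS refl] .
  have phint: "set_integrable N S (\<lambda>u. \<phi> (r * u) * z)" for r z
  proof (rule set_integrable_bounded[OF S fin, of _ "B * \<bar>z\<bar>"])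
    show "(\<lambda>u. \<phi> (r * u) * z) \<in> borel_measurable N"
      by (intro borel_measurable_times phiN) auto
    fix u show "\<bar>\<phi> (r * u) * z\<bar> \<le> B * \<bar>z\<bar>"
      unfolding abs_mult using phi0[of "r*u"] B[of "r*u"] by (simp add: mult_right_mono)
  qed
  define J where "J = (\<lambda>k::nat. LINT u:S|N. \<phi> (real k * u / real n))"
  have J0: "0 \<le> J k" for k
    unfolding J_def by (rule set_integral_nonneg') (use phint[of "real k / real n" 1] phi0 in auto)
  have IJ: "I_int n \<phi> \<tau> v \<le> J n"
    unfolding I_int_def J_def[symmetric] S_def[symmetric] N_def[symmetric]
    by (rule cINF_lower) (use J0 in \<open>auto intro!: bdd_belowI[of _ 0]\<close>)
  have I0: "0 \<le> I_int n \<phi> \<tau> v"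
    unfolding I_int_def J_def[symmetric] S_def[symmetric] N_def[symmetric]
    by (rule cINF_greatest) (use J0 in auto)
  have JB: "J n \<le> B * m"
  proof -
    have "J n \<le> (LINT u:S|N. B)"
      unfolding J_def
      by (rule set_integral_mono) (use phint[of "real n / real n" 1] set_integrable_const'[OF S fin] B n in auto)
    also have "\<dots> = B * m" using S fin by (simp add: set_integral_const m_def)
    finally show ?thesis .
  qed
  have "B * m \<le> B * W" using mW B0 by (simp add: mult_left_mono)
  then show ?thesis using IJ JB I0 by (simp add: W_def)
qed

lemma Vset_pos: "v \<in> Vset \<tau> \<Longrightarrow> v \<tau> - v 0 > 0"
proof -
  assume "v \<in> Vset \<tau>"
  then obtain s t where st: "s \<in> {0..\<tau>}" "t \<in> {0..\<tau>}" "v s \<noteq> v t" and vm: "mono_on {0..\<tau>} v"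
    by (auto simp: Vset_def)
  have "v 0 \<le> v s" "v s \<le> v \<tau>" "v 0 \<le> v t" "v t \<le> v \<tau>"
    using st by (auto intro!: mono_onD[OF vm])
  then show ?thesis using st by linarith
qed



theorem corollary1:
  fixes M :: "int \<Rightarrow> real \<Rightarrow> real" and f :: "real \<Rightarrow> complex"
    and \<tau> :: real and n :: nat and \<phi> :: "real \<Rightarrow> real"
  assumes "\<And>k. orlicz (M k)"
    and "f \<in> S_M M"
    and "\<tau> > 0" and "n \<ge> 1"
    and "\<phi> \<in> Phi"
  shows "best_approx M n f \<le> 2 * C_const n \<phi> \<tau> * modulus M \<phi> f (\<tau> / real n)"
proof -
  note M = assms(1) and tau = assms(3) and n = assms(4) and phi = assms(5)
  have fL: "f \<in> periodic_L" using assms(2) by (simp add: S_M_def)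
  define c where "c = (\<lambda>k. if k \<in> {-int (n-1)..int (n-1)} then 0 else fourier_coeff f k)"
  define t where "t = (\<lambda>x. \<Sum>j\<in>{-int (n-1)..int (n-1)}. fourier_coeff f j * exp (\<i> * of_int j * of_real x))"
  define \<omega> where "\<omega> = modulus M \<phi> f (\<tau> / real n)"
  define C where "C = C_const n \<phi> \<tau>"
  have tT: "t \<in> trig_polys (n - 1)" unfolding trig_polys_def t_def by blast
  have fc: "fourier_coeff (\<lambda>x. f x - t x) = c"
    unfolding c_def t_def by (rule ext, rule fc_partial[OF fL])
  have best: "best_approx M n f \<le> lux_norm M c"
    unfolding best_approx_def by (rule INF_lower2[OF tT]) (simp add: fc)
  have om0: "0 \<le> \<omega>"
    unfolding \<omega>_def modulus_def
    by (rule SUP_upper2[of 0]) (use tau in simp, rule lux_nonneg)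
  have phi0: "\<And>t. 0 \<le> \<phi> t" using phi by (auto simp: Phi_def)
  have "bounded (range \<phi>)" using phi by (simp add: Phi_def)
  then obtain B0 where B0: "\<forall>x\<in>range \<phi>. norm x \<le> B0" unfolding bounded_iff by blast
  define B where "B = max B0 1"
  have B: "\<phi> t \<le> B" for t
  proof -
    have "norm (\<phi> t) \<le> B0" using B0 by simp
    then show ?thesis unfolding B_def by simp
  qed
  have Bp: "B > 0" by (simp add: B_def)
  have Cpos: "ereal (1 / B) \<le> C"
    unfolding C_def C_const_def
  proof (rule INF_greatest)
    fix v assume v: "v \<in> Vset \<tau>"
    have W: "v \<tau> - v 0 > 0" by (rule Vset_pos[OF v])
    have Ib: "0 \<le> I_int n \<phi> \<tau> v \<and> I_int n \<phi> \<tau> v \<le> B * (v \<tau> - v 0)"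
      by (rule I_bound[OF tau n phi v B])
    show "ereal (1 / B) \<le> ereal (v \<tau> - v 0) / ereal (I_int n \<phi> \<tau> v)"
    proof (cases "I_int n \<phi> \<tau> v = 0")
      case True
      then show ?thesis using W by simp
    next
      case False
      then have Ip: "I_int n \<phi> \<tau> v > 0" using Ib by simp
      have "1 / B \<le> (v \<tau> - v 0) / I_int n \<phi> \<tau> v"
        using Ib Ip Bp by (simp add: field_simps)
      then show ?thesis using False by simp
    qed
  qed
  have Cp: "C > 0" using Cpos Bp by (rule_tac order_less_le_trans[of _ "ereal (1 / B)"]) simp_all
  show ?thesis
  proof (cases "\<omega> = 0")
    case True
    have "c k = 0" for k
    proof (cases "k \<in> {-int (n-1)..int (n-1)}")
      case True then show ?thesis by (simp add: c_def)
    next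
      case False
      then have k0: "k \<noteq> 0" and ck: "c k = fourier_coeff f k" by (auto simp: c_def)
      show ?thesis
      proof (rule ccontr)
        assume nz: "c k \<noteq> 0"
        have zero: "\<phi> s = 0" if s: "s \<in> {0..\<tau> / real n}" for s
        proof -
          define h where "h = s / of_int k"
          have "1 \<le> \<bar>k\<bar>" using k0 by linarith
          then have k1: "1 \<le> \<bar>real_of_int k\<bar>" by (metis of_int_1_le_iff of_int_abs)
          have s0: "0 \<le> s" using s by simp
          have "s * 1 \<le> s * \<bar>real_of_int k\<bar>" by (rule mult_left_mono[OF k1 s0])
          then have "\<bar>h\<bar> \<le> s" using k1 s0 unfolding h_def by (simp add: abs_divide divide_le_eq)
          then have "\<bar>h\<bar> \<le> \<tau> / real n" using s by simp
          then have "lux_norm M (Delta \<phi> h f) \<le> \<omega>"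
            unfolding \<omega>_def modulus_def by (intro SUP_upper) auto
          then have "lux_norm M (Delta \<phi> h f) \<le> 0" using True by simp
          then have "Delta \<phi> h f k = 0" by (rule lux_zero_imp[OF M])
          then have "\<phi> (of_int k * h) = 0" using nz ck by (simp add: Delta_def)
          then show ?thesis using k0 by (simp add: h_def)
        qed
        have "{0..\<tau> / real n} \<in> null_sets lborel"
          by (rule null_sets_subset[of "{t. \<phi> t = 0}"]) (use phi zero in \<open>auto simp: Phi_def\<close>)
        then have "emeasure lborel {0..\<tau> / real n} = 0" by auto
        then show False using tau n by simp
      qed
    qed
    then have "lux_norm M c = 0" by (rule lux_zero_seq[OF M])
    then have "best_approx M n f \<le> 0" using best by simp
    then show ?thesis using True by (simp add: \<omega>_def C_def)
  next
    case False
    then have omp: "\<omega> > 0" using om0 by simp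
    show ?thesis
    proof (cases "\<omega> = \<infinity>")
      case True
      have C2: "0 < 2 * C" using Cp by (cases C) auto
      have "2 * C * \<omega> = \<infinity>" using True Cp C2 by (simp add: ereal_mult_infty)
      then have X: "2 * C_const n \<phi> \<tau> * modulus M \<phi> f (\<tau> / real n) = \<infinity>"
        by (simp only: \<omega>_def C_def)
      show ?thesis by (subst X) simp
    next
      case False
      then obtain w where w: "\<omega> = ereal w" using om0 by (cases \<omega>) auto
      have wp: "w > 0" using omp w by simp
      have bv: "best_approx M n f * ereal (1 / w) \<le> ereal (v \<tau> - v 0) / ereal (I_int n \<phi> \<tau> v)"
        if v: "v \<in> Vset \<tau>" for v
      proof -
        have W: "v \<tau> - v 0 > 0" by (rule Vset_pos[OF v])
        have Ib: "0 \<le> I_int n \<phi> \<tau> v \<and> I_int n \<phi> \<tau> v \<le> B * (v \<tau> - v 0)"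
          by (rule I_bound[OF tau n phi v B])
        show ?thesis
        proof (cases "I_int n \<phi> \<tau> v = 0")
          case True
          then show ?thesis using W by simp
        next
          case False
          then have Ip: "I_int n \<phi> \<tau> v > 0" using Ib by simp
          define K where "K = (v \<tau> - v 0) / I_int n \<phi> \<tau> v"
          have Kp: "K > 0" using W Ip by (simp add: K_def)
          have lb: "best_approx M n f \<le> ereal (K * bb)" if bb: "bb > w" for bb
          proof -
            have "modulus M \<phi> f (\<tau> / real n) < ereal bb" using w bb by (simp add: \<omega>_def)
            from main_bound[OF M tau n phi v Ip _ this] bb wp
            have "lux_norm M c \<le> ereal ((v \<tau> - v 0) * bb / I_int n \<phi> \<tau> v)"
              by (simp add: c_def)
            then show ?thesis using best by (simp add: K_def)
          qed
          have "best_approx M n f \<le> ereal (K * w)"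
          proof (rule ereal_le_epsilon2)
            fix e :: real assume e: "0 < e"
            have "best_approx M n f \<le> ereal (K * (w + e / K))"
              by (rule lb) (use e Kp in simp)
            also have "K * (w + e / K) = K * w + e" using Kp by (simp add: field_simps)
            finally show "best_approx M n f \<le> ereal (K * w) + ereal e" by simp
          qed
          then have "best_approx M n f * ereal (1 / w) \<le> ereal (K * w) * ereal (1 / w)"
            by (rule ereal_mult_right_mono) (use wp in simp)
          also have "\<dots> = ereal K" using wp by simp
          finally show ?thesis using False by (simp add: K_def)
        qed
      qed
      have "best_approx M n f * ereal (1 / w) \<le> C"
        unfolding C_def C_const_def by (rule INF_greatest) (rule bv)
      then have "best_approx M n f * ereal (1 / w) * ereal w \<le> C * ereal w"
        by (rule ereal_mult_right_mono) (use wp in simp)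
      moreover have "best_approx M n f * ereal (1 / w) * ereal w = best_approx M n f"
        using wp by (simp add: mult.assoc)
      ultimately have "best_approx M n f \<le> C * \<omega>" using w by simp
      also have "C * \<omega> \<le> 2 * C * \<omega>"
      proof -
        have "0 \<le> C * \<omega>" using Cp om0 by simp
        then show ?thesis by (cases "C * \<omega>") (auto simp: mult.assoc)
      qed
      finally show ?thesis by (simp add: \<omega>_def C_def)
    qed
  qed
qed

end
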